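(* Let $k\in\mathbb N$, $P>0$, and let $F:\mathbb R\to\mathbb C$ be a $1$-periodic integrable function. Suppose that $w\in\mathbb N$ and $Q$ satisfy $1\le Q\le \tfrac12 (P/w)^{k/2}$. Then for every $q\in\mathbb N$ with $(q,w)=1$ one has \[ \int_{\mathfrak M_q(Q,P)}F(\alpha w^k)\,d\alpha = w^{-k}\int_{\mathfrak M_q(Q,P/w)}F(\beta)\,d\beta . \]
   Context: For real $X>0$, $Q\ge1$ and $q\in\mathbb N$ with $q\le Q$, and integers $a$ with $0\le a\le q$, $(a,q)=1$, put $\mathfrak M_{q,a}(Q,X)=\{\alpha\in[0,1):|q\alpha-a|\le QX^{-k}\}$, and let $\mathfrak M_q(Q,X)$ be the union of the sets $\mathfrak M_{q,a}(Q,X)$ over $0\le a\le q$ with $(a,q)=1$. By convention $\mathfrak M_q(Q,X)=\emptyset$ when $q>Q$. *)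

theory Defs
  imports "HOL-Analysis.Analysis"
begin

definition major_arc_qa :: "nat \<Rightarrow> real \<Rightarrow> real \<Rightarrow> nat \<Rightarrow> int \<Rightarrow> real set" where
  "major_arc_qa k Q X q a = {\<alpha> \<in> {0..<1}. \<bar>real q * \<alpha> - real_of_int a\<bar> \<le> Q * inverse (X ^ k)}"

definition major_arc_q :: "nat \<Rightarrow> real \<Rightarrow> real \<Rightarrow> nat \<Rightarrow> real set" where
  "major_arc_q k Q X q =
     (if real q \<le> Q
      then (\<Union>a\<in>{a::int. 0 \<le> a \<and> a \<le> int q \<and> coprime a (int q)}. major_arc_qa k Q X q a)
      else {})"

end

theory Submission imports Defs begin

lemma cop_shift: "coprime (x + m * t) m \<longleftrightarrow> coprime x (m::int)"
proof -
  have "gcd m (t * m + x) = gcd m x" by (rule gcd_add_mult)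
  then show ?thesis by (simp add: coprime_iff_gcd_eq_1 gcd.commute ac_simps)
qed

lemma core:
  fixes n q :: nat and d \<beta> :: real
  assumes n: "n \<ge> 1" and q: "q \<ge> 1" and cop: "coprime q n"
    and b0: "0 \<le> \<beta>" "\<beta> < 1" and d: "d < 1/2"
  shows "card {j. j < n \<and> (\<exists>a::int. 0 \<le> a \<and> a \<le> int q \<and> coprime a (int q) \<and>
            \<bar>real q * \<beta> - real_of_int (a * int n - int q * int j)\<bar> \<le> d)}
         = (if \<exists>b::int. 0 \<le> b \<and> b \<le> int q \<and> coprime b (int q) \<and> \<bar>real q * \<beta> - real_of_int b\<bar> \<le> d
            then 1 else 0)"
proof -
  define S where "S = {j. j < n \<and> (\<exists>a::int. 0 \<le> a \<and> a \<le> int q \<and> coprime a (int q) \<and>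
            \<bar>real q * \<beta> - real_of_int (a * int n - int q * int j)\<bar> \<le> d)}"
  have copi: "coprime (int q) (int n)" using cop by simp
  have uniq: "j = j'" if jS: "j \<in> S" and j'S: "j' \<in> S" for j j'
  proof -
    obtain a where a: "0 \<le> a" "a \<le> int q" 
      "\<bar>real q * \<beta> - real_of_int (a * int n - int q * int j)\<bar> \<le> d"
      using jS unfolding S_def by blast
    obtain a' where a': "0 \<le> a'" "a' \<le> int q" 
      "\<bar>real q * \<beta> - real_of_int (a' * int n - int q * int j')\<bar> \<le> d"
      using j'S unfolding S_def by blast
    have jn: "j < n" "j' < n" using jS j'S unfolding S_def by auto
    define z where "z = (a * int n - int q * int j) - (a' * int n - int q * int j')"
    have "\<bar>real_of_int z\<bar> < 1"
      using a(3) a'(3) d unfolding z_def of_int_diff by linarith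
    then have "\<bar>z\<bar> < 1" by (metis of_int_abs of_int_less_1_iff)
    then have "z = 0" by simp
    then have e: "(a * int n - int q * int j) = (a' * int n - int q * int j')" unfolding z_def by simp
    then have e2: "int n * (a - a') = int q * (int j - int j')" by (simp add: algebra_simps)
    then have "int q dvd int n * (a - a')" by simp
    then have "int q dvd (a - a')" using copi by (simp add: coprime_dvd_mult_right_iff)
    then obtain t where t: "a - a' = int q * t" by blast
    have "int q * (int n * t) = int q * (int j - int j')" using e2 t by (simp add: algebra_simps)
    then have nt: "int n * t = int j - int j'" using q by simp
    have "t = 0"
    proof (rule ccontr)
      assume "t \<noteq> 0"
      then have "\<bar>t\<bar> \<ge> 1" by linarith
      then have "int n * \<bar>t\<bar> \<ge> int n * 1" by (intro mult_left_mono) auto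
      then have "\<bar>int n * t\<bar> \<ge> int n" by (simp add: abs_mult)
      then show False using nt jn by linarith
    qed
    then show ?thesis using nt by simp
  qed
  have card: "card S = (if S = {} then 0 else 1)"
  proof (cases "S = {}")
    case False
    then obtain j where "j \<in> S" by blast
    then have "S = {j}" using uniq by blast
    then show ?thesis by simp
  qed simp
  have iff: "S \<noteq> {} \<longleftrightarrow> (\<exists>b::int. 0 \<le> b \<and> b \<le> int q \<and> coprime b (int q) \<and> \<bar>real q * \<beta> - real_of_int b\<bar> \<le> d)"
  proof
    assume "S \<noteq> {}"
    then obtain j a where j: "j < n" and a: "0 \<le> a" "a \<le> int q" "coprime a (int q)"
      "\<bar>real q * \<beta> - real_of_int (a * int n - int q * int j)\<bar> \<le> d"
      unfolding S_def by blast
    define b where "b = a * int n - int q * int j"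
    have "coprime (a * int n) (int q)" using a(3) copi by (simp add: coprime_commute)
    then have cb: "coprime b (int q)" unfolding b_def
      using cop_shift[of "a * int n" "int q" "- int j"] by simp
    have "real q * \<beta> \<ge> 0" "real q * \<beta> < real q" using b0 q by auto
    then have "real_of_int b > -1" "real_of_int b < real q + 1" using a(4) d unfolding b_def by linarith+
    then have "0 \<le> b" "b \<le> int q" by linarith+
    then show "\<exists>b::int. 0 \<le> b \<and> b \<le> int q \<and> coprime b (int q) \<and> \<bar>real q * \<beta> - real_of_int b\<bar> \<le> d"
      using cb a(4) unfolding b_def by blast
  next
    assume "\<exists>b::int. 0 \<le> b \<and> b \<le> int q \<and> coprime b (int q) \<and> \<bar>real q * \<beta> - real_of_int b\<bar> \<le> d"
    then obtain b where b: "0 \<le> b" "b \<le> int q" "coprime b (int q)" "\<bar>real q * \<beta> - real_of_int b\<bar> \<le> d"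
      by blast
    obtain u v where uv: "u * int n + v * int q = 1"
      using bezout_int[of "int n" "int q"] copi by (auto simp: coprime_iff_gcd_eq_1 gcd.commute)
    define a0 where "a0 = (b * u) mod int q"
    have a0: "0 \<le> a0" "a0 < int q" using q unfolding a0_def by auto
    define j0 where "j0 = - (b * v + (b * u div int q) * int n)"
    have bu: "a0 = b * u - int q * (b * u div int q)" unfolding a0_def by (simp add: minus_div_mult_eq_mod[symmetric] ac_simps)
    have un: "u * int n = 1 - v * int q" using uv by linarith
    have "a0 * int n = b * (u * int n) - int q * (b * u div int q) * int n"
      unfolding bu by (simp add: algebra_simps)
    also have "\<dots> = b * (1 - v * int q) - int q * (b * u div int q) * int n"
      by (simp only: un)
    finally have j0: "a0 * int n - b = int q * j0" unfolding j0_def by (simp add: algebra_simps)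
    have "a0 * int n \<le> (int q - 1) * int n" using a0 n by (intro mult_right_mono) auto
    then have "int q * j0 < int q * int n" using j0 b n by (simp add: algebra_simps)
    then have j0n: "j0 < int n" using q by simp
    have "a0 * int n \<ge> 0" using a0 by simp
    then have "int q * j0 \<ge> int q * (-1)" using j0 b by linarith
    then have j0m: "j0 \<ge> -1" using q mult_le_cancel_left_pos[of "int q" "-1" j0] by simp
    have ca0: "coprime a0 (int q)"
    proof -
      have "a0 * int n + int q * (- j0) = b" using j0 by (simp add: algebra_simps)
      then have "coprime (a0 * int n + int q * (- j0)) (int q)" using b(3) by simp
      then have "coprime (a0 * int n) (int q)" using cop_shift by blast
      then show ?thesis by simp
    qed
    show "S \<noteq> {}"
    proof (cases "j0 \<ge> 0")
      case True
      have e: "a0 * int n - int q * int (nat j0) = b" using True j0 by simp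
      have jn: "nat j0 < n" using j0n True by simp
      have "\<exists>a::int. 0 \<le> a \<and> a \<le> int q \<and> coprime a (int q) \<and>
            \<bar>real q * \<beta> - real_of_int (a * int n - int q * int (nat j0))\<bar> \<le> d"
        by (rule exI[of _ a0]) (use a0 ca0 b(4) e in simp)
      then have "nat j0 \<in> S" unfolding S_def using jn by blast
      then show ?thesis by blast
    next
      case False
      then have "j0 = -1" using j0m by simp
      then have "a0 * int n = b - int q" using j0 by simp
      moreover have "a0 * int n \<ge> 0" using a0 by simp
      ultimately have bq: "b = int q" "a0 = 0" using b(2) n a0 by (auto simp: mult_eq_0_iff) 
      have e: "int q * int n - int q * int (n - 1) = b" using n bq by (simp add: of_nat_diff algebra_simps)
      have "\<exists>a::int. 0 \<le> a \<and> a \<le> int q \<and> coprime a (int q) \<and>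
            \<bar>real q * \<beta> - real_of_int (a * int n - int q * int (n - 1))\<bar> \<le> d"
        by (rule exI[of _ "int q"]) (use b(3,4) bq e in \<open>simp add: mult.commute\<close>)
      then have "n - 1 \<in> S" unfolding S_def using n by auto
      then show ?thesis by blast
    qed
  qed
  have "card S = (if \<exists>b::int. 0 \<le> b \<and> b \<le> int q \<and> coprime b (int q) \<and> \<bar>real q * \<beta> - real_of_int b\<bar> \<le> d
            then 1 else 0)" unfolding card iff[symmetric] by simp
  then show ?thesis unfolding S_def .
qed


lemma periodic_nat:
  assumes "\<And>x. F (x + 1) = F x"
  shows "F (x - real j) = F x"
proof (induction j)
  case (Suc j)
  have "F (x - real (Suc j)) = F ((x - real (Suc j)) + 1)" by (rule assms[symmetric])
  also have "(x - real (Suc j)) + 1 = x - real j" by simp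
  finally show ?case using Suc by simp
qed simp

lemma sum_indicator_intervals:
  "(\<Sum>j<n. indicator {real j..<real j + 1} x) = (indicator {0..<real n} x :: real)"
proof (induction n)
  case (Suc n)
  have "indicator {0..<real (Suc n)} x = (indicator {0..<real n} x :: real) + indicator {real n..<real n + 1} x"
    by (auto simp: indicator_def)
  then show ?case using Suc by simp
qed simp

lemma arc_qa_borel: "major_arc_qa k Q X q a \<in> sets borel"
proof -
  have "{\<alpha>::real. \<bar>real q * \<alpha> - real_of_int a\<bar> \<le> Q * inverse (X ^ k)} \<in> sets borel"
    by (intro borel_closed closed_Collect_le continuous_intros)
  moreover have "major_arc_qa k Q X q a = {0..<1} \<inter> {\<alpha>::real. \<bar>real q * \<alpha> - real_of_int a\<bar> \<le> Q * inverse (X ^ k)}"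
    by (auto simp: major_arc_qa_def)
  ultimately show ?thesis by simp
qed

lemma arc_q_borel: "major_arc_q k Q X q \<in> sets borel"
proof -
  have fin: "finite {a::int. 0 \<le> a \<and> a \<le> int q \<and> coprime a (int q)}"
    by (rule finite_subset[of _ "{0..int q}"]) auto
  show ?thesis unfolding major_arc_q_def
    using fin arc_qa_borel by (auto intro!: sets.finite_UN)
qed

lemma arc_q_sub: "major_arc_q k Q X q \<subseteq> {0..<1}"
  by (auto simp: major_arc_q_def major_arc_qa_def split: if_splits)

lemma arc_q_mem: "x \<in> major_arc_q k Q X q \<longleftrightarrow> real q \<le> Q \<and> x \<in> {0..<1} \<and>
   (\<exists>a::int. 0 \<le> a \<and> a \<le> int q \<and> coprime a (int q) \<and> \<bar>real q * x - real_of_int a\<bar> \<le> Q * inverse (X ^ k))"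
  by (auto simp: major_arc_q_def major_arc_qa_def)

lemma shift_integrable:
  fixes f :: "real \<Rightarrow> complex"
  assumes "integrable lborel f" shows "integrable lborel (\<lambda>x. f (x - c))"
  using lborel_integrable_real_affine_iff[of 1 f "-c"] assms by simp

lemma shift_integral:
  fixes f :: "real \<Rightarrow> complex"
  shows "integral\<^sup>L lborel (\<lambda>x. f (x - c)) = integral\<^sup>L lborel f"
  using lborel_integral_real_affine[of 1 f "-c"] by simp

theorem lemma2p3:
  fixes k w q :: nat and P Q :: real and F :: "real \<Rightarrow> complex"
  assumes "P > 0"
    and "\<And>x. F (x + 1) = F x"
    and "set_integrable lborel {0..1} F"
    and "w \<ge> 1"
    and "1 \<le> Q" and "Q \<le> 1/2 * (P / real w) powr (real k / 2)"
    and "q \<ge> 1" and "coprime q w"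
  shows "(LINT \<alpha>:major_arc_q k Q P q|lborel. F (\<alpha> * real w ^ k))
       = complex_of_real (inverse (real w ^ k)) * (LINT \<beta>:major_arc_q k Q (P / real w) q|lborel. F \<beta>)"
proof -
  define N where "N = real w ^ k"
  define n where "n = w ^ k"
  have Nn: "real n = N" unfolding N_def n_def by simp
  have n1: "n \<ge> 1" using assms(4) unfolding n_def by simp
  have Npos: "N > 0" using n1 Nn by linarith
  define A where "A = major_arc_q k Q P q"
  define B where "B = major_arc_q k Q (P / real w) q"
  define d where "d = Q * inverse ((P / real w) ^ k)"
  define R where "R = P / real w"
  have Rpos: "R > 0" unfolding R_def using assms(1,4) by simp
  have "(R powr (real k / 2))^2 = R ^ k"
  proof -
    have "(R powr (real k / 2))^2 = R powr (real k / 2 + real k / 2)"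
      by (simp add: power2_eq_square powr_add[symmetric])
    also have "\<dots> = R ^ k" using Rpos by (simp add: powr_realpow)
    finally show ?thesis .
  qed
  moreover have "Q^2 \<le> (1/2 * R powr (real k / 2))^2"
    using assms(5,6) unfolding R_def by (intro power_mono) auto
  moreover have "(1/2 * X)^2 = X^2 / 4" for X :: real by (simp add: power2_eq_square)
  ultimately have "4 * Q^2 \<le> R ^ k" by (metis le_divide_eq_numeral1(1) mult.commute)
  moreover have "Q \<le> Q^2" using assms(5) by (simp add: power2_eq_square)
  ultimately have "4 * Q \<le> R ^ k" by linarith
  then have d14: "d \<le> 1/4" unfolding d_def R_def[symmetric] using Rpos
    by (simp add: divide_simps)
  have dN: "Q * inverse (P ^ k) * N = d"
    unfolding d_def N_def using assms(1,4) by (simp add: power_divide field_simps)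
  have cop: "coprime q n" unfolding n_def using assms(8) by simp
  have memA: "(\<beta> + real j) / N \<in> A \<longleftrightarrow> real q \<le> Q \<and>
      (\<exists>a::int. 0 \<le> a \<and> a \<le> int q \<and> coprime a (int q) \<and>
            \<bar>real q * \<beta> - real_of_int (a * int n - int q * int j)\<bar> \<le> d)"
    if b: "0 \<le> \<beta>" "\<beta> < 1" and j: "j < n" for \<beta> j
  proof -
    have r: "(\<beta> + real j) / N \<in> {0..<1}"
    proof -
      have "real j + 1 \<le> real n" using j by linarith
      then have "\<beta> + real j < N" using b Nn by linarith
      then show ?thesis using b Npos by simp
    qed
    have key: "\<bar>real q * ((\<beta> + real j) / N) - real_of_int a\<bar> \<le> Q * inverse (P ^ k) \<longleftrightarrow>
        \<bar>real q * \<beta> - real_of_int (a * int n - int q * int j)\<bar> \<le> d" for a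
    proof -
      have "real q * ((\<beta> + real j) / N) - real_of_int a
            = (real q * \<beta> - real_of_int (a * int n - int q * int j)) / N"
        using Npos Nn by (simp add: field_simps)
      then have "\<bar>real q * ((\<beta> + real j) / N) - real_of_int a\<bar>
            = \<bar>real q * \<beta> - real_of_int (a * int n - int q * int j)\<bar> / N"
        using Npos by simp
      then show ?thesis using Npos dN[symmetric] by (simp add: divide_le_eq)
    qed
    show ?thesis unfolding A_def arc_q_mem using r key by simp
  qed
  have memB: "\<beta> \<in> B \<longleftrightarrow> real q \<le> Q \<and> \<beta> \<in> {0..<1} \<and>
      (\<exists>b::int. 0 \<le> b \<and> b \<le> int q \<and> coprime b (int q) \<and> \<bar>real q * \<beta> - real_of_int b\<bar> \<le> d)"
    for \<beta> unfolding B_def arc_q_mem d_def by simp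
  have pw: "(\<Sum>j<n. indicator {0..<1} \<beta> * indicator A ((\<beta> + real j) / N)) = (indicator B \<beta> :: real)"
    for \<beta>
  proof (cases "\<beta> \<in> {0..<1} \<and> real q \<le> Q")
    case False
    then have "\<beta> \<notin> B" using memB by auto
    moreover have z: "indicator {0..<1} \<beta> * indicator A ((\<beta> + real j) / N) = (0::real)" for j
      using False by (cases "\<beta> \<in> {0..<1}") (auto simp: A_def major_arc_q_def indicator_def)
    have "(\<Sum>j<n. indicator {0..<1} \<beta> * indicator A ((\<beta> + real j) / N)) = (0::real)"
      by (rule sum.neutral) (use z in blast)
    ultimately show ?thesis by simp
  next
    case True
    then have b: "0 \<le> \<beta>" "\<beta> < 1" "real q \<le> Q" by auto
    have "(\<Sum>j<n. indicator {0..<1} \<beta> * indicator A ((\<beta> + real j) / N))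
        = (\<Sum>j\<in>{..<n}. indicator {j. (\<beta> + real j) / N \<in> A} j :: real)"
      using b by (intro sum.cong) (auto simp: indicator_def)
    also have "\<dots> = real (card ({..<n} \<inter> {j. (\<beta> + real j) / N \<in> A}))"
      unfolding indicator_def by simp
    also have "{..<n} \<inter> {j. (\<beta> + real j) / N \<in> A} = {j. j < n \<and> (\<exists>a::int. 0 \<le> a \<and> a \<le> int q \<and> coprime a (int q) \<and>
            \<bar>real q * \<beta> - real_of_int (a * int n - int q * int j)\<bar> \<le> d)}"
      using memA[OF b(1,2)] b(3) by auto
    also have "card \<dots> = (if \<exists>b::int. 0 \<le> b \<and> b \<le> int q \<and> coprime b (int q) \<and> \<bar>real q * \<beta> - real_of_int b\<bar> \<le> d
            then 1 else 0)"
      using core[OF n1 assms(7) cop b(1,2)] d14 by simp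
    finally show ?thesis using memB[of \<beta>] b by (simp add: indicator_def)
  qed
  define H where "H j \<beta> = (indicator {0..<1} \<beta> * indicator A ((\<beta> + real j) / N)) *\<^sub>R F \<beta>" for j \<beta>
  have Hint: "integrable lborel (H j)" for j
  proof -
    let ?f = "\<lambda>\<beta>::real. (\<beta> + real j) / N"
    have fm: "?f \<in> borel_measurable lborel" by measurable
    have Am: "A \<in> sets borel" unfolding A_def by (rule arc_q_borel)
    have "?f -` A \<inter> space lborel \<in> sets lborel" using measurable_sets[OF fm Am] .
    then have S: "{0..<1} \<inter> (?f -` A \<inter> space lborel) \<in> sets lborel" by simp
    have "set_integrable lborel ({0..<1} \<inter> (?f -` A \<inter> space lborel)) F"
      by (rule set_integrable_subset[OF assms(3) S]) auto
    moreover have "H j = (\<lambda>\<beta>. indicator ({0..<1} \<inter> (?f -` A \<inter> space lborel)) \<beta> *\<^sub>R F \<beta>)"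
      unfolding H_def by (auto simp: indicator_def fun_eq_iff)
    ultimately show ?thesis by (simp add: set_integrable_def)
  qed
  have step1: "integral\<^sup>L lborel (\<lambda>\<alpha>. indicator A \<alpha> *\<^sub>R F (\<alpha> * N))
      = (1 / N) *\<^sub>R integral\<^sup>L lborel (\<lambda>x. indicator A (x / N) *\<^sub>R F x)"
    using lborel_integral_real_affine[of "1/N" "\<lambda>\<alpha>. indicator A \<alpha> *\<^sub>R F (\<alpha> * N)" 0] Npos
    by simp
  have step2: "(\<lambda>x. indicator A (x / N) *\<^sub>R F x) = (\<lambda>x. \<Sum>j<n. H j (x - real j))"
  proof
    fix x
    have "(\<Sum>j<n. H j (x - real j)) = (\<Sum>j<n. (indicator {real j..<real j + 1} x * indicator A (x / N)) *\<^sub>R F x)"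
      unfolding H_def using periodic_nat[of F, OF assms(2)]
      by (intro sum.cong) (auto simp: indicator_def)
    also have "\<dots> = (indicator {0..<real n} x * indicator A (x / N)) *\<^sub>R F x"
      by (simp add: scaleR_sum_left[symmetric] sum_distrib_right[symmetric] sum_indicator_intervals)
    also have "indicator {0..<real n} x * indicator A (x / N) = (indicator A (x / N) :: real)"
    proof (cases "x / N \<in> A")
      case True
      then have "x / N \<in> {0..<1}" using arc_q_sub unfolding A_def by blast
      then have "x \<in> {0..<real n}" using Npos Nn by (auto simp: divide_simps)
      then show ?thesis by simp
    qed simp
    finally show "indicator A (x / N) *\<^sub>R F x = (\<Sum>j<n. H j (x - real j))" by simp
  qed
  have "integral\<^sup>L lborel (\<lambda>x. \<Sum>j<n. H j (x - real j)) = (\<Sum>j<n. integral\<^sup>L lborel (\<lambda>x. H j (x - real j)))"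
    by (rule Bochner_Integration.integral_sum[where I="{..<n}" and M=lborel and f="\<lambda>j x. H j (x - real j)"]) (rule shift_integrable[OF Hint])
  also have "\<dots> = (\<Sum>j<n. integral\<^sup>L lborel (H j))" by (simp add: shift_integral)
  also have "\<dots> = integral\<^sup>L lborel (\<lambda>\<beta>. \<Sum>j<n. H j \<beta>)"
    by (rule Bochner_Integration.integral_sum[where I="{..<n}" and M=lborel and f="\<lambda>j x. H j x", symmetric]) (rule Hint)
  also have "(\<lambda>\<beta>. \<Sum>j<n. H j \<beta>) = (\<lambda>\<beta>. indicator B \<beta> *\<^sub>R F \<beta>)"
    unfolding H_def by (simp add: scaleR_sum_left[symmetric] pw)
  finally have step3: "integral\<^sup>L lborel (\<lambda>x. indicator A (x / N) *\<^sub>R F x)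
      = integral\<^sup>L lborel (\<lambda>\<beta>. indicator B \<beta> *\<^sub>R F \<beta>)" unfolding step2 .
  show ?thesis
    unfolding set_lebesgue_integral_def N_def[symmetric] A_def[symmetric] B_def[symmetric]
    using step1 step3 by (simp add: scaleR_conv_of_real divide_inverse)
qed

end
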